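(* Consider the system $\dot v_1=-v_1^2-v_2$, $\dot v_2=-v_1v_2+v_1$ with initial data $(v_1(0),v_2(0))\in\mathbb{R}^2$. Its solution blows up in finite positive time if and only if $1-2v_2(0)\le v_1(0)^2$.
   Context: This is the extended system $\dot{\mathbf v}=-v_1\mathbf v+Q\mathbf v$ with $Q=\begin{pmatrix}0&-1\\1&0\end{pmatrix}$ (eigenvalues $\pm i$), governing $(v_1,v_2)=(V_x,E_x)$ along characteristics for the cold plasma case of the pressureless Euler–Poisson system $V_t+VV_x=kE-\gamma V$, $E_t+VE_x=NV$ with $k=-1$, $N=1$, $\gamma=0$. *)

theory Defs
  imports "HOL-Analysis.Analysis"
begin

definition is_solution_on :: "real \<Rightarrow> real \<Rightarrow> real \<Rightarrow> (real \<Rightarrow> real) \<Rightarrow> (real \<Rightarrow> real) \<Rightarrow> bool" where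
  "is_solution_on T a b v1 v2 \<longleftrightarrow>
     v1 0 = a \<and> v2 0 = b \<and>
     (\<forall>t\<in>{0..<T}.
        (v1 has_real_derivative (- ((v1 t) ^ 2) - v2 t)) (at t within {0..<T}) \<and>
        (v2 has_real_derivative (- v1 t * v2 t + v1 t)) (at t within {0..<T}))"

text \<open>Finite-time blow-up: the solution exists on some [0,T), T finite and positive,
  and is unbounded there (by uniqueness, T is then the maximal existence time).\<close>
definition blows_up :: "real \<Rightarrow> real \<Rightarrow> bool" where
  "blows_up a b \<longleftrightarrow>
     (\<exists>T>0. \<exists>v1 v2. is_solution_on T a b v1 v2 \<and>
        \<not> bounded ((\<lambda>t. (v1 t, v2 t)) ` {0..<T}))"

end

theory Submission
  imports Defs
begin

definition pp :: "real \<Rightarrow> real \<Rightarrow> real \<Rightarrow> real" where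
  "pp a b t = 1 - b + b * cos t + a * sin t"
definition dp :: "real \<Rightarrow> real \<Rightarrow> real \<Rightarrow> real" where
  "dp a b t = a * cos t - b * sin t"
definition U1 :: "real \<Rightarrow> real \<Rightarrow> real \<Rightarrow> real" where
  "U1 a b t = dp a b t / pp a b t"
definition U2 :: "real \<Rightarrow> real \<Rightarrow> real \<Rightarrow> real" where
  "U2 a b t = 1 + (b - 1) / pp a b t"

lemma pp_deriv: "(pp a b has_real_derivative dp a b t) (at t)"
  unfolding pp_def[abs_def] dp_def
  by (auto intro!: derivative_eq_intros)

lemma dp_deriv: "(dp a b has_real_derivative (-(pp a b t) + 1 - b)) (at t)"
  unfolding pp_def dp_def[abs_def]
  by (auto intro!: derivative_eq_intros)

lemma pp_cont: "continuous_on S (pp a b)"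
  unfolding pp_def[abs_def] by (intro continuous_intros)

lemma U_deriv:
  assumes "pp a b t \<noteq> 0"
  shows "(U1 a b has_real_derivative (- ((U1 a b t) ^ 2) - U2 a b t)) (at t)"
    "(U2 a b has_real_derivative (- U1 a b t * U2 a b t + U1 a b t)) (at t)"
proof -
  have "(U1 a b has_real_derivative ((-(pp a b t) + 1 - b) * pp a b t - dp a b t * dp a b t) / (pp a b t * pp a b t)) (at t)"
    unfolding U1_def[abs_def] using DERIV_divide[OF dp_deriv pp_deriv assms] by simp
  moreover have "((-(pp a b t) + 1 - b) * pp a b t - dp a b t * dp a b t) / (pp a b t * pp a b t) = - ((U1 a b t) ^ 2) - U2 a b t"
    using assms unfolding U1_def U2_def by (simp add: field_simps power2_eq_square)
  ultimately show "(U1 a b has_real_derivative (- ((U1 a b t) ^ 2) - U2 a b t)) (at t)" by simp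
  have "(U2 a b has_real_derivative (- ((b - 1) * dp a b t) / (pp a b t)^2)) (at t)"
    unfolding U2_def[abs_def] using assms
    by (auto intro!: derivative_eq_intros pp_deriv simp: power2_eq_square)
  moreover have "- ((b - 1) * dp a b t) / (pp a b t)^2 = - U1 a b t * U2 a b t + U1 a b t"
    using assms unfolding U1_def U2_def by (simp add: field_simps power2_eq_square)
  ultimately show "(U2 a b has_real_derivative (- U1 a b t * U2 a b t + U1 a b t)) (at t)" by simp
qed

lemma pp0: "pp a b 0 = 1" by (simp add: pp_def)

lemma zero_exists:
  assumes h: "1 - 2 * b \<le> a ^ 2"
  shows "\<exists>s>0. pp a b s \<le> 0"
proof -
  define R where "R = sqrt (a^2 + b^2)"
  have Rpos: "R > 0"
  proof -
    have "a^2 + b^2 > 0"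
    proof (rule ccontr)
      assume "\<not> a^2 + b^2 > 0"
      then have "a = 0" "b = 0" by (auto simp: sum_power2_gt_zero_iff)
      with h show False by simp
    qed
    then show ?thesis unfolding R_def by simp
  qed
  have R2: "R^2 = a^2 + b^2" unfolding R_def by simp
  have "(-b/R)^2 + (-a/R)^2 = 1" proof -
    have "(-b/R)^2 + (-a/R)^2 = (a^2+b^2)/R^2" by (simp add: power_divide add_divide_distrib)
    moreover have "(a^2+b^2)/R^2 = 1" using Rpos by (simp add: R2[symmetric])
    ultimately show ?thesis by simp
  qed
  then obtain s where s: "0 \<le> s" "-b/R = cos s" "-a/R = sin s"
    by (rule sincos_total_2pi) auto
  have "pp a b s = 1 - b - (b^2 + a^2)/R"
    unfolding pp_def s(2,3)[symmetric] using Rpos by (simp add: field_simps power2_eq_square)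
  also have "\<dots> = 1 - b - R" using R2 Rpos by (simp add: field_simps power2_eq_square)
  also have "\<dots> \<le> 0"
  proof (cases "1 - b \<le> 0")
    case True then show ?thesis using Rpos by simp
  next
    case False
    have "(1 - b)^2 \<le> a^2 + b^2" using h by (simp add: power2_eq_square algebra_simps)
    then have "1 - b \<le> R" unfolding R_def by (rule real_le_rsqrt)
    then show ?thesis by simp
  qed
  finally have "pp a b s \<le> 0" .
  moreover have "s \<noteq> 0" using calculation pp0[of a b] by auto
  ultimately show ?thesis using s(1) by (intro exI[of _ s]) auto
qed

lemma blowup_if:
  assumes h: "1 - 2 * b \<le> a ^ 2"
  shows "\<exists>T>0. pp a b T = 0 \<and> (\<forall>t\<in>{0..<T}. pp a b t > 0)"
proof -
  obtain s where s: "s > 0" "pp a b s \<le> 0" using zero_exists[OF h] by blast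
  define Z where "Z = {t \<in> {0..s}. pp a b t = 0}"
  have "\<exists>x. 0 \<le> x \<and> x \<le> s \<and> pp a b x = 0"
    by (rule IVT2') (use s pp0[of a b] pp_cont in auto)
  then have Zne: "Z \<noteq> {}" unfolding Z_def by auto
  have Zcl: "closed Z" unfolding Z_def
    by (rule continuous_closed_preimage_constant) (auto intro: pp_cont)
  have Zbd: "bdd_below Z" unfolding Z_def by (auto intro: bdd_belowI[of _ 0])
  define T where "T = Inf Z"
  have TZ: "T \<in> Z" unfolding T_def by (rule closed_contains_Inf[OF Zne Zbd Zcl])
  have Tlow: "\<And>x. x \<in> Z \<Longrightarrow> T \<le> x" unfolding T_def using Zbd by (auto intro: cInf_lower)
  have T0: "pp a b T = 0" "0 \<le> T" "T \<le> s" using TZ unfolding Z_def by auto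
  have "T \<noteq> 0" using T0 pp0[of a b] by auto
  have pos: "pp a b t > 0" if t: "t \<in> {0..<T}" for t
  proof (rule ccontr)
    assume "\<not> pp a b t > 0"
    then have "\<exists>x. 0 \<le> x \<and> x \<le> t \<and> pp a b x = 0"
      by (intro IVT2') (use t pp0[of a b] pp_cont in auto)
    then obtain x where "0 \<le> x" "x \<le> t" "pp a b x = 0" by blast
    then have "x \<in> Z" using t T0 unfolding Z_def by auto
    then have "T \<le> x" by (rule Tlow)
    with \<open>x \<le> t\<close> t show False by auto
  qed
  show ?thesis using T0 \<open>T \<noteq> 0\<close> pos by (intro exI[of _ T]) auto
qed

lemma dp_eq: "pp a b t \<noteq> 0 \<Longrightarrow> dp a b t = U1 a b t * pp a b t"
  unfolding U1_def by simp

lemma blows_up_of: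
  assumes h: "1 - 2 * b \<le> a ^ 2"
  shows "blows_up a b"
proof -
  obtain T where T: "T > 0" "pp a b T = 0" "\<And>t. t\<in>{0..<T} \<Longrightarrow> pp a b t > 0"
    using blowup_if[OF h] by blast
  have sol: "is_solution_on T a b (U1 a b) (U2 a b)"
    unfolding is_solution_on_def
  proof (intro conjI ballI)
    show "U1 a b 0 = a" "U2 a b 0 = b" by (simp_all add: U1_def U2_def pp0 dp_def)
  next
    fix t assume t: "t \<in> {0..<T}"
    then have "pp a b t \<noteq> 0" using T(3) by force
    from U_deriv[OF this] show
      "(U1 a b has_real_derivative (- ((U1 a b t) ^ 2) - U2 a b t)) (at t within {0..<T})"
      "(U2 a b has_real_derivative (- U1 a b t * U2 a b t + U1 a b t)) (at t within {0..<T})"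
      by (auto intro: has_field_derivative_at_within)
  qed
  have unb: "\<not> bounded ((\<lambda>t. (U1 a b t, U2 a b t)) ` {0..<T})"
  proof
    assume "bounded ((\<lambda>t. (U1 a b t, U2 a b t)) ` {0..<T})"
    then obtain B where B: "\<And>x. x \<in> (\<lambda>t. (U1 a b t, U2 a b t)) ` {0..<T} \<Longrightarrow> norm x \<le> B"
      unfolding bounded_iff by blast
    define M where "M = \<bar>B\<bar>"
    have M: "\<bar>U1 a b t\<bar> \<le> M" if "t \<in> {0..<T}" for t
    proof -
      have "\<bar>U1 a b t\<bar> \<le> norm (U1 a b t, U2 a b t)"
        by (metis norm_fst_le fst_conv real_norm_def)
      also have "\<dots> \<le> B" using B that by blast
      finally show ?thesis unfolding M_def by simp
    qed
    define g where "g t = pp a b t * exp (M * t)" for t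
    have "g 0 \<le> g T"
    proof (rule DERIV_nonneg_imp_increasing_open[of 0 T g])
      show "0 \<le> T" using T by simp
      show "continuous_on {0..T} g" unfolding g_def
        by (intro continuous_intros pp_cont)
      fix x assume x: "0 < x" "x < T"
      then have px: "pp a b x > 0" using T(3) by auto
      have "(g has_real_derivative dp a b x * exp (M * x) + pp a b x * (exp (M * x) * M)) (at x)"
        unfolding g_def[abs_def]
        by (auto intro!: derivative_eq_intros pp_deriv)
      moreover have "dp a b x * exp (M * x) + pp a b x * (exp (M * x) * M)
          = (U1 a b x + M) * pp a b x * exp (M * x)"
        using dp_eq[of a b x] px by (simp add: algebra_simps)
      moreover have "(U1 a b x + M) * pp a b x * exp (M * x) \<ge> 0"
        using M[of x] x px by (intro mult_nonneg_nonneg) auto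
      ultimately show "\<exists>y. (g has_real_derivative y) (at x) \<and> y \<ge> 0" by auto
    qed
    then show False unfolding g_def using T(2) pp0[of a b] by simp
  qed
  show ?thesis unfolding blows_up_def using T(1) sol unb by blast
qed

lemma key_ineq:
  fixes v1 v2 u1 u2 M :: real
  assumes M: "\<bar>v1\<bar> + \<bar>v2\<bar> + \<bar>u1\<bar> \<le> M"
  shows "2 * (v1 - u1) * ((- (v1 ^ 2) - v2) - (- (u1 ^ 2) - u2)) + 2 * (v2 - u2) * ((- v1 * v2 + v1) - (- u1 * u2 + u1))
     \<le> 4 * M * ((v1 - u1)^2 + (v2 - u2)^2)"
proof -
  define x where "x = v1 - u1"
  define y where "y = v2 - u2"
  have id: "2 * (v1 - u1) * ((- (v1 ^ 2) - v2) - (- (u1 ^ 2) - u2)) + 2 * (v2 - u2) * ((- v1 * v2 + v1) - (- u1 * u2 + u1))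
      = -2*(v1+u1)*x^2 - 2* v2*(x*y) - 2*u1*y^2"
    unfolding x_def y_def by (simp add: algebra_simps power2_eq_square)
  have x2: "x^2 \<ge> 0" "y^2 \<ge> 0" by simp_all
  have M0: "M \<ge> 0" using M by linarith
  have Mx: "M*x^2 \<ge> 0" "M*y^2 \<ge> 0" using M0 x2 by simp_all
  have t1: "-2*(v1+u1)*x^2 \<le> 2*(M*x^2)"
  proof -
    have "-(v1+u1) \<le> M" using M by linarith
    then have "(-(v1+u1))*x^2 \<le> M*x^2" using x2 by (intro mult_right_mono) auto
    moreover have "-2*(v1+u1)*x^2 = 2*((-(v1+u1))*x^2)" by simp
    ultimately show ?thesis by linarith
  qed
  have xy: "\<bar>2*(x*y)\<bar> \<le> x^2 + y^2"
  proof -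
    have "0 \<le> (\<bar>x\<bar> - \<bar>y\<bar>)^2" by simp
    also have "(\<bar>x\<bar> - \<bar>y\<bar>)^2 = x^2 + y^2 - \<bar>2*(x*y)\<bar>"
      by (simp add: power2_diff abs_mult)
    finally show ?thesis by linarith
  qed
  have t2: "- 2* v2*(x*y) \<le> M*x^2 + M*y^2"
  proof -
    have "- 2* v2*(x*y) \<le> \<bar>- 2* v2*(x*y)\<bar>" by (rule abs_ge_self)
    also have "\<dots> = \<bar>v2\<bar> * \<bar>2*(x*y)\<bar>" by (simp add: abs_mult)
    also have "\<dots> \<le> M * (x^2+y^2)" using M xy by (intro mult_mono) auto
    also have "\<dots> = M*x^2 + M*y^2" by (simp add: distrib_left)
    finally show ?thesis .
  qed
  have t3: "-2*u1*y^2 \<le> 2*(M*y^2)"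
  proof -
    have "-u1 \<le> M" using M by linarith
    then have "(-u1)*y^2 \<le> M*y^2" using x2 by (intro mult_right_mono) auto
    moreover have "-2*u1*y^2 = 2*((-u1)*y^2)" by simp
    ultimately show ?thesis by linarith
  qed
  have e: "4 * M * ((v1 - u1)^2 + (v2 - u2)^2) = 4*(M*x^2) + 4*(M*y^2)"
    unfolding x_def y_def by (simp add: distrib_left)
  show ?thesis unfolding id e using t1 t2 t3 Mx by linarith
qed
lemma U_cont:
  assumes nz: "\<And>t. pp a b t \<noteq> 0"
  shows "continuous_on S (U1 a b)" "continuous_on S (U2 a b)"
  using U_deriv[OF nz] by (auto intro!: continuous_at_imp_continuous_on DERIV_isCont)

lemma uniq:
  assumes sol: "is_solution_on T a b v1 v2" and nz: "\<And>t. pp a b t \<noteq> 0"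
    and t0: "t0 \<in> {0..<T}"
  shows "v1 t0 = U1 a b t0 \<and> v2 t0 = U2 a b t0"
proof -
  have i1: "v1 0 = a" "v2 0 = b" using sol unfolding is_solution_on_def by auto
  have D: "\<And>t. t \<in> {0..<T} \<Longrightarrow> (v1 has_real_derivative (- ((v1 t) ^ 2) - v2 t)) (at t within {0..<T})"
    "\<And>t. t \<in> {0..<T} \<Longrightarrow> (v2 has_real_derivative (- v1 t * v2 t + v1 t)) (at t within {0..<T})"
    using sol unfolding is_solution_on_def by auto
  have cv: "continuous_on {0..<T} v1" "continuous_on {0..<T} v2"
    by (rule DERIV_continuous_on, rule D(1), assumption) (rule DERIV_continuous_on, rule D(2), assumption)
  have sub: "{0..t0} \<subseteq> {0..<T}" using t0 by auto
  have cv': "continuous_on {0..t0} v1" "continuous_on {0..t0} v2"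
    using cv continuous_on_subset[OF _ sub] by auto
  note cU = U_cont[OF nz]
  define h where "h t = \<bar>v1 t\<bar> + \<bar>v2 t\<bar> + \<bar>U1 a b t\<bar>" for t
  have "continuous_on {0..t0} h" unfolding h_def by (intro continuous_intros cv' cU)
  then have "bounded (h ` {0..t0})" by (intro compact_imp_bounded compact_continuous_image) auto
  then obtain B where B: "\<And>t. t \<in> {0..t0} \<Longrightarrow> norm (h t) \<le> B" unfolding bounded_iff by blast
  have hB: "\<bar>v1 t\<bar> + \<bar>v2 t\<bar> + \<bar>U1 a b t\<bar> \<le> B" if "t \<in> {0..t0}" for t
    using B[OF that] unfolding h_def by simp
  define E where "E t = (v1 t - U1 a b t)^2 + (v2 t - U2 a b t)^2" for t
  define g where "g t = E t * exp (- (4 * B * t))" for t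
  have "g t0 \<le> g 0"
  proof (rule DERIV_nonpos_imp_decreasing_open[of 0 t0 g])
    show "0 \<le> t0" using t0 by simp
    show "continuous_on {0..t0} g" unfolding g_def E_def
      by (intro continuous_intros cv' cU)
    fix x assume x: "0 < x" "x < t0"
    then have xi: "x \<in> interior {0..<T}" using t0 by auto
    have xT: "x \<in> {0..<T}" using x t0 by auto
    have dv1: "(v1 has_real_derivative (- ((v1 x) ^ 2) - v2 x)) (at x)"
      using D(1)[OF xT] at_within_interior[OF xi] by simp
    have dv2: "(v2 has_real_derivative (- v1 x * v2 x + v1 x)) (at x)"
      using D(2)[OF xT] at_within_interior[OF xi] by simp
    note dU = U_deriv[OF nz[of x]]
    define E' where "E' = 2 * (v1 x - U1 a b x) * ((- ((v1 x) ^ 2) - v2 x) - (- ((U1 a b x) ^ 2) - U2 a b x))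
       + 2 * (v2 x - U2 a b x) * ((- v1 x * v2 x + v1 x) - (- U1 a b x * U2 a b x + U1 a b x))"
    have "(g has_real_derivative E' * exp (- (4 * B * x)) + E x * (exp (- (4 * B * x)) * (- (4 * B)))) (at x)"
      unfolding g_def[abs_def] E_def[abs_def] E'_def
      by (auto intro!: derivative_eq_intros dv1 dv2 dU simp: algebra_simps)
    moreover have "E' \<le> 4 * B * E x"
      unfolding E'_def E_def using key_ineq[OF hB] x by auto
    then have "E' * exp (- (4 * B * x)) + E x * (exp (- (4 * B * x)) * (- (4 * B))) \<le> 0"
      by (simp add: algebra_simps mult_right_mono)
    ultimately show "\<exists>y. (g has_real_derivative y) (at x) \<and> y \<le> 0" by blast
  qed
  moreover have "g 0 = 0" unfolding g_def E_def using i1 by (simp add: U1_def U2_def pp0 dp_def)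
  moreover have "g t0 \<ge> 0" unfolding g_def E_def by simp
  ultimately have "E t0 = 0" unfolding g_def by simp
  then show ?thesis unfolding E_def by (simp add: add_nonneg_eq_0_iff)
qed

lemma pp_lower:
  assumes h: "a ^ 2 < 1 - 2 * b"
  shows "\<exists>d>0. \<forall>t. pp a b t \<ge> d"
proof -
  define R where "R = sqrt (a^2 + b^2)"
  have b1: "1 - b > 0" using h by (smt (verit) zero_le_power2)
  have "a^2 + b^2 < (1 - b)^2" using h by (simp add: power2_eq_square algebra_simps)
  then have "R < sqrt ((1-b)^2)" unfolding R_def by (rule real_sqrt_less_mono)
  then have Rl: "R < 1 - b" using b1 by simp
  have cs: "b * cos t + a * sin t \<ge> - R" for t
  proof -
    have "(b * cos t + a * sin t)^2 + (a * cos t - b * sin t)^2 = (a^2 + b^2) * ((sin t)^2 + (cos t)^2)"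
      unfolding power2_eq_square by algebra
    then have "(b * cos t + a * sin t)^2 + (a * cos t - b * sin t)^2 = a^2 + b^2" by simp
    moreover have "(a * cos t - b * sin t)^2 \<ge> 0" by simp
    ultimately have "(-(b * cos t + a * sin t))^2 \<le> a^2 + b^2" unfolding power2_minus by linarith
    then have "-(b * cos t + a * sin t) \<le> R" unfolding R_def by (rule real_le_rsqrt)
    then show ?thesis by simp
  qed
  have "\<forall>t. pp a b t \<ge> 1 - b - R"
  proof
    fix t
    have "pp a b t = 1 - b + (b * cos t + a * sin t)" by (simp add: pp_def)
    then show "pp a b t \<ge> 1 - b - R" using cs[of t] by linarith
  qed
  then show ?thesis using Rl by (intro exI[of _ "1 - b - R"]) auto
qed

lemma U_bounded:
  assumes h: "a ^ 2 < 1 - 2 * b"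
  shows "bounded ((\<lambda>t. (U1 a b t, U2 a b t)) ` S)"
proof -
  obtain d where d: "d > 0" "\<And>t. pp a b t \<ge> d" using pp_lower[OF h] by blast
  have dp: "\<bar>dp a b t\<bar> \<le> \<bar>a\<bar> + \<bar>b\<bar>" for t
  proof -
    have "\<bar>a * cos t\<bar> \<le> \<bar>a\<bar>" by (simp add: abs_mult mult_left_le)
    moreover have "\<bar>b * sin t\<bar> \<le> \<bar>b\<bar>" by (simp add: abs_mult mult_left_le)
    ultimately show ?thesis unfolding dp_def by linarith
  qed
  have u1: "\<bar>U1 a b t\<bar> \<le> (\<bar>a\<bar> + \<bar>b\<bar>) / d" for t
  proof -
    have p: "pp a b t \<ge> d" "pp a b t > 0" using d(2)[of t] d(1) by auto
    have "\<bar>U1 a b t\<bar> = \<bar>dp a b t\<bar> / pp a b t" unfolding U1_def using p by (simp add: abs_div)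
    also have "\<dots> \<le> (\<bar>a\<bar> + \<bar>b\<bar>) / pp a b t" using dp p by (intro divide_right_mono) auto
    also have "\<dots> \<le> (\<bar>a\<bar> + \<bar>b\<bar>) / d" using p d(1) by (intro divide_left_mono) auto
    finally show ?thesis .
  qed
  have u2: "\<bar>U2 a b t\<bar> \<le> 1 + \<bar>b - 1\<bar> / d" for t
  proof -
    have p: "pp a b t \<ge> d" "pp a b t > 0" using d(2)[of t] d(1) by auto
    have q: "\<bar>(b - 1) / pp a b t\<bar> = \<bar>b - 1\<bar> / pp a b t" using p by simp
    have "\<bar>U2 a b t\<bar> \<le> \<bar>1::real\<bar> + \<bar>(b - 1) / pp a b t\<bar>" unfolding U2_def by (rule abs_triangle_ineq)
    then have "\<bar>U2 a b t\<bar> \<le> 1 + \<bar>b - 1\<bar> / pp a b t" unfolding q by simp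
    also have "\<dots> \<le> 1 + \<bar>b - 1\<bar> / d" using p d(1) by (simp add: divide_left_mono)
    finally show ?thesis .
  qed
  show ?thesis unfolding bounded_iff
  proof (intro exI ballI)
    fix z assume "z \<in> (\<lambda>t. (U1 a b t, U2 a b t)) ` S"
    then obtain t where z: "z = (U1 a b t, U2 a b t)" by blast
    have "norm z \<le> norm (U1 a b t) + norm (U2 a b t)" unfolding z by (rule norm_Pair_le)
    also have "\<dots> \<le> (\<bar>a\<bar> + \<bar>b\<bar>) / d + (1 + \<bar>b - 1\<bar> / d)" using u1[of t] u2[of t] by simp
    finally show "norm z \<le> (\<bar>a\<bar> + \<bar>b\<bar>) / d + (1 + \<bar>b - 1\<bar> / d)" .
  qed
qed

theorem mainTheorem15:
  fixes a b :: real
  shows "blows_up a b \<longleftrightarrow> 1 - 2 * b \<le> a ^ 2"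
proof
  assume "1 - 2 * b \<le> a ^ 2" then show "blows_up a b" by (rule blows_up_of)
next
  assume bu: "blows_up a b"
  show "1 - 2 * b \<le> a ^ 2"
  proof (rule ccontr)
    assume "\<not> 1 - 2 * b \<le> a ^ 2"
    then have h: "a ^ 2 < 1 - 2 * b" by simp
    obtain d where d: "d > 0" "\<And>t. pp a b t \<ge> d" using pp_lower[OF h] by blast
    have nz: "\<And>t. pp a b t \<noteq> 0" using d by (metis less_le_trans less_irrefl)
    obtain T v1 v2 where sol: "is_solution_on T a b v1 v2"
      and ub: "\<not> bounded ((\<lambda>t. (v1 t, v2 t)) ` {0..<T})"
      using bu unfolding blows_up_def by blast
    have "(\<lambda>t. (v1 t, v2 t)) ` {0..<T} = (\<lambda>t. (U1 a b t, U2 a b t)) ` {0..<T}"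
      proof (rule image_cong)
      fix t assume "t \<in> {0..<T}"
      from uniq[OF sol nz this] show "(v1 t, v2 t) = (U1 a b t, U2 a b t)" by simp
    qed simp
    with ub U_bounded[OF h] show False by simp
  qed
qed

end
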